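(* Let $E:\mathbb{R}^M\to\mathbb{R}$ be the discretized Lifshitz–Petrich energy described in the context. Let $\bar U\in\mathbb{R}^M$ and $U\in\mathbb{R}^M$ be states lying in the generalized quadratic region of a generalized local minimum of $E$ (so $H(U)$ and $H(\bar U)$ have no negative eigenvalues), and suppose $\dim\mathcal{W}^k(U)\le\dim\mathcal{W}^k(\bar U)$ and $\|\sin\Theta(\mathcal{W}^k(U),\mathcal{W}^k(\bar U))\|_2<1$. Then every solution $\bm v$ of the optimization problem $$\min_{\bm v\in\mathbb{R}^M}\langle\bm v,H(U)\bm v\rangle\quad\text{s.t.}\quad\langle\bm v,\bm v\rangle=1,\ \ \bm v\perp\mathcal{W}^k(\bar U)$$ has an ascent component, i.e. its orthogonal projection onto $\mathcal{W}^s(U)$ is nonzero.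
   Context: Setting: fix an invertible lattice matrix $\bm A\in\mathbb{R}^{n\times n}$ and $\bm B$ with $\bm A\bm B^T=2\pi I$; grid $\Omega_N=\{\bm A(j_1/N,\dots,j_n/N)^T:0\le j_i\le N-1\}$ with $M=N^n$ points; $U\in\mathbb{R}^M$ is a grid function; $\langle f,g\rangle=\frac1M\sum_s f(\bm r_s)\overline{g(\bm r_s)}$. $\mathcal{F}_M$ is the discrete Fourier transform over $\mathbb{K}_N^n=\{\bm k\in\mathbb{Z}^n:-N/2\le k_j<N/2\}$, $D$ is diagonal with entries $[q_1^2-|\bm B\bm k|^2]^2[q_2^2-|\bm B\bm k|^2]^2$, $\varepsilon,\alpha\in\mathbb{R}$. Energy $E(U)=\tfrac12\langle U,\mathcal{F}_M^{-1}D\mathcal{F}_MU\rangle+\frac1M\sum_s(-\tfrac\varepsilon2u_s^2-\tfrac\alpha3u_s^3+\tfrac14u_s^4)$, gradient $\nabla E(U)=\mathcal{F}_M^{-1}D\mathcal{F}_MU+\operatorname{diag}(-\varepsilon-\alpha U+U^2)U$, Hessian $H(U)=\mathcal{F}_M^{-1}D\mathcal{F}_M+\operatorname{diag}(-\varepsilon-2\alpha U+3U^2)$ (a real symmetric matrix). A generalized local minimum (GLM) is a critical point ($\nabla E=0$) whose Hessian has no negative eigenvalues. The generalized quadratic region (GQR) of a generalized critical point $U^*$ is a region around $U^*$ on which $H(U)$ has the same number of negative eigenvalues as $H(U^* )$. $\mathcal{W}^k(U)$, $\mathcal{W}^s(U)$ are the spans of eigenvectors of $H(U)$ with zero, resp.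 positive, eigenvalues. Principal angles: for subspaces $\mathcal{W},\widehat{\mathcal{W}}\subset\mathbb{R}^M$ with $\dim\mathcal{W}=d\le\dim\widehat{\mathcal{W}}$, the angles $0\le\theta_1\le\dots\le\theta_d\le\pi/2$ are defined recursively by $\cos\theta_i=\max\{\bm u^T\bm v/(\|\bm u\|_2\|\bm v\|_2):\bm u\in\mathcal{W},\bm u\perp\bm u_1,\dots,\bm u_{i-1},\ \bm v\in\widehat{\mathcal{W}},\bm v\perp\bm v_1,\dots,\bm v_{i-1}\}$, attained at $(\bm u_i,\bm v_i)$; $\sin\Theta(\mathcal{W},\widehat{\mathcal{W}})=\operatorname{diag}(\sin\theta_1,\dots,\sin\theta_d)$, so $\|\sin\Theta(\mathcal{W},\widehat{\mathcal{W}})\|_2=\sin\theta_d$. *)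

theory Defs
  imports "HOL-Analysis.Analysis"
begin

text \<open>Spatial dimension n = CARD('n).  Grid points are indexed by a finite type 'g together
  with a bijection grid :: 'g => ('n => nat) onto the index set {0..N-1}^n, so that
  R^M is real^'g with M = CARD('g) = N^n.\<close>

definition grid_pt :: "real^'n^'n \<Rightarrow> nat \<Rightarrow> ('g \<Rightarrow> 'n \<Rightarrow> nat) \<Rightarrow> 'g \<Rightarrow> real^'n" where
  "grid_pt A N grid s = A *v (\<chi> i. real (grid s i) / real N)"

definition modes :: "nat \<Rightarrow> ('n::finite \<Rightarrow> int) set" where
  "modes N = {k. \<forall>i. - (real N / 2) \<le> real_of_int (k i) \<and> real_of_int (k i) < real N / 2}"

definition freq :: "real^'n^'n \<Rightarrow> ('n \<Rightarrow> int) \<Rightarrow> real^'n" where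
  "freq B k = B *v (\<chi> i. real_of_int (k i))"

definition LP_symbol :: "real \<Rightarrow> real \<Rightarrow> real^'n^'n \<Rightarrow> ('n \<Rightarrow> int) \<Rightarrow> real" where
  "LP_symbol q1 q2 B k =
     (q1^2 - (norm (freq B k))^2)^2 * (q2^2 - (norm (freq B k))^2)^2"

definition DFT :: "real^'n^'n \<Rightarrow> real^'n^'n \<Rightarrow> nat \<Rightarrow> ('g::finite \<Rightarrow> 'n::finite \<Rightarrow> nat)
                    \<Rightarrow> real^'g \<Rightarrow> ('n \<Rightarrow> int) \<Rightarrow> complex" where
  "DFT A B N grid U k =
     (1 / of_nat CARD('g)) *
     (\<Sum>s\<in>UNIV. complex_of_real (U $ s) *
                  exp (- \<i> * complex_of_real (freq B k \<bullet> grid_pt A N grid s)))"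

definition IDFT :: "real^'n^'n \<Rightarrow> real^'n^'n \<Rightarrow> nat \<Rightarrow> ('g::finite \<Rightarrow> 'n::finite \<Rightarrow> nat)
                    \<Rightarrow> (('n \<Rightarrow> int) \<Rightarrow> complex) \<Rightarrow> 'g \<Rightarrow> complex" where
  "IDFT A B N grid W s =
     (\<Sum>k\<in>modes N. W k * exp (\<i> * complex_of_real (freq B k \<bullet> grid_pt A N grid s)))"

text \<open>The linear operator F_M^{-1} D F_M acting on real grid functions (real part taken).\<close>
definition LP_lin :: "real^'n^'n \<Rightarrow> real^'n^'n \<Rightarrow> nat \<Rightarrow> ('g::finite \<Rightarrow> 'n::finite \<Rightarrow> nat)
                      \<Rightarrow> real \<Rightarrow> real \<Rightarrow> real^'g \<Rightarrow> real^'g" where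
  "LP_lin A B N grid q1 q2 U =
     (\<chi> s. Re (IDFT A B N grid
                 (\<lambda>k. complex_of_real (LP_symbol q1 q2 B k) * DFT A B N grid U k) s))"

definition gip :: "real^'g::finite \<Rightarrow> real^'g \<Rightarrow> real" where
  "gip f g = (1 / real CARD('g)) * (\<Sum>s\<in>UNIV. f $ s * g $ s)"

definition LP_energy :: "real^'n^'n \<Rightarrow> real^'n^'n \<Rightarrow> nat \<Rightarrow> ('g::finite \<Rightarrow> 'n::finite \<Rightarrow> nat)
      \<Rightarrow> real \<Rightarrow> real \<Rightarrow> real \<Rightarrow> real \<Rightarrow> real^'g \<Rightarrow> real" where
  "LP_energy A B N grid q1 q2 \<epsilon> \<alpha> U =
     1/2 * gip U (LP_lin A B N grid q1 q2 U)
     + (1 / real CARD('g)) * (\<Sum>s\<in>UNIV. - \<epsilon>/2 * (U$s)^2 - \<alpha>/3 * (U$s)^3 + 1/4 * (U$s)^4)"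

definition LP_grad :: "real^'n^'n \<Rightarrow> real^'n^'n \<Rightarrow> nat \<Rightarrow> ('g::finite \<Rightarrow> 'n::finite \<Rightarrow> nat)
      \<Rightarrow> real \<Rightarrow> real \<Rightarrow> real \<Rightarrow> real \<Rightarrow> real^'g \<Rightarrow> real^'g" where
  "LP_grad A B N grid q1 q2 \<epsilon> \<alpha> U =
     LP_lin A B N grid q1 q2 U + (\<chi> s. (- \<epsilon> - \<alpha> * U$s + (U$s)^2) * U$s)"

definition LP_hess :: "real^'n^'n \<Rightarrow> real^'n^'n \<Rightarrow> nat \<Rightarrow> ('g::finite \<Rightarrow> 'n::finite \<Rightarrow> nat)
      \<Rightarrow> real \<Rightarrow> real \<Rightarrow> real \<Rightarrow> real \<Rightarrow> real^'g \<Rightarrow> real^'g^'g" where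
  "LP_hess A B N grid q1 q2 \<epsilon> \<alpha> U =
     (\<chi> s t. LP_lin A B N grid q1 q2 (axis t 1) $ s
             + (if s = t then - \<epsilon> - 2 * \<alpha> * U$s + 3 * (U$s)^2 else 0))"

definition is_eigval :: "real^'m^'m \<Rightarrow> real \<Rightarrow> bool" where
  "is_eigval H c \<longleftrightarrow> (\<exists>v. v \<noteq> 0 \<and> H *v v = c *\<^sub>R v)"

definition neg_index :: "real^'m^'m \<Rightarrow> nat" where
  "neg_index H = (\<Sum>c\<in>{c. c < 0 \<and> is_eigval H c}. dim {v. H *v v = c *\<^sub>R v})"

definition no_neg_eigval :: "real^'m^'m \<Rightarrow> bool" where
  "no_neg_eigval H \<longleftrightarrow> (\<forall>c. is_eigval H c \<longrightarrow> c \<ge> 0)"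

definition Wk :: "real^'m^'m \<Rightarrow> (real^'m) set" where
  "Wk H = span {v. v \<noteq> 0 \<and> H *v v = 0 *\<^sub>R v}"

definition Ws :: "real^'m^'m \<Rightarrow> (real^'m) set" where
  "Ws H = span {v. \<exists>c>0. v \<noteq> 0 \<and> H *v v = c *\<^sub>R v}"

definition orth_proj :: "(real^'m) set \<Rightarrow> real^'m \<Rightarrow> real^'m" where
  "orth_proj W v = (THE p. p \<in> W \<and> (\<forall>w\<in>W. (v - p) \<bullet> w = 0))"

definition principal_seq :: "(real^'m) set \<Rightarrow> (real^'m) set \<Rightarrow> (nat \<Rightarrow> real^'m)
                              \<Rightarrow> (nat \<Rightarrow> real^'m) \<Rightarrow> bool" where
  "principal_seq W W' us vs \<longleftrightarrow>
     (\<forall>i < dim W.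
        us i \<in> W \<and> vs i \<in> W' \<and> norm (us i) = 1 \<and> norm (vs i) = 1 \<and>
        (\<forall>j<i. us i \<bullet> us j = 0 \<and> vs i \<bullet> vs j = 0) \<and>
        (\<forall>u\<in>W. \<forall>v\<in>W'. u \<noteq> 0 \<longrightarrow> v \<noteq> 0 \<longrightarrow> (\<forall>j<i. u \<bullet> us j = 0 \<and> v \<bullet> vs j = 0) \<longrightarrow>
            (u \<bullet> v) / (norm u * norm v) \<le> us i \<bullet> vs i))"

text \<open>Principal angles theta_1 <= ... <= theta_d (0-indexed here), cos theta_i = us i . vs i.\<close>
definition principal_angles :: "(real^'m) set \<Rightarrow> (real^'m) set \<Rightarrow> nat \<Rightarrow> real" where
  "principal_angles W W' =
     (SOME \<theta>. \<exists>us vs. principal_seq W W' us vs \<and> (\<forall>i. \<theta> i = arccos (us i \<bullet> vs i)))"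

text \<open>The 2-norm of sin Theta(W, W') = diag(sin theta_1, ..., sin theta_d), i.e. sin theta_d
  (and 0 if d = 0).\<close>
definition sin_Theta_norm :: "(real^'m) set \<Rightarrow> (real^'m) set \<Rightarrow> real" where
  "sin_Theta_norm W W' =
     (if dim W = 0 then 0 else sin (principal_angles W W' (dim W - 1)))"

definition is_GLM :: "real^'n^'n \<Rightarrow> real^'n^'n \<Rightarrow> nat \<Rightarrow> ('g::finite \<Rightarrow> 'n::finite \<Rightarrow> nat)
      \<Rightarrow> real \<Rightarrow> real \<Rightarrow> real \<Rightarrow> real \<Rightarrow> real^'g \<Rightarrow> bool" where
  "is_GLM A B N grid q1 q2 \<epsilon> \<alpha> U \<longleftrightarrow>
     LP_grad A B N grid q1 q2 \<epsilon> \<alpha> U = 0 \<and> no_neg_eigval (LP_hess A B N grid q1 q2 \<epsilon> \<alpha> U)"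

definition in_GQR :: "real^'n^'n \<Rightarrow> real^'n^'n \<Rightarrow> nat \<Rightarrow> ('g::finite \<Rightarrow> 'n::finite \<Rightarrow> nat)
      \<Rightarrow> real \<Rightarrow> real \<Rightarrow> real \<Rightarrow> real \<Rightarrow> real^'g \<Rightarrow> real^'g \<Rightarrow> bool" where
  "in_GQR A B N grid q1 q2 \<epsilon> \<alpha> Ustar U \<longleftrightarrow>
     neg_index (LP_hess A B N grid q1 q2 \<epsilon> \<alpha> U) = neg_index (LP_hess A B N grid q1 q2 \<epsilon> \<alpha> Ustar)"

definition is_constrained_min :: "real^'g::finite^'g \<Rightarrow> (real^'g) set \<Rightarrow> real^'g \<Rightarrow> bool" where
  "is_constrained_min H W v \<longleftrightarrow>
     gip v v = 1 \<and> (\<forall>w\<in>W. gip v w = 0) \<and>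
     (\<forall>x. gip x x = 1 \<and> (\<forall>w\<in>W. gip x w = 0) \<longrightarrow> gip v (H *v v) \<le> gip x (H *v x))"

end

theory Submission
  imports Defs
begin

lemma LP_lin_axis:
  "LP_lin A B N grid q1 q2 (axis t 1) $ s =
     (\<Sum>k\<in>modes N. LP_symbol q1 q2 B k * cos (freq B k \<bullet> grid_pt A N grid s - freq B k \<bullet> grid_pt A N grid t)) / real CARD('g)"
  for grid :: "'g::finite \<Rightarrow> 'n::finite \<Rightarrow> nat"
proof -
  have d: "DFT A B N grid (axis t 1) k = (1 / of_nat CARD('g)) * exp (- \<i> * complex_of_real (freq B k \<bullet> grid_pt A N grid t))" for k
    unfolding DFT_def axis_def by (simp add: vec_lambda_beta if_distrib[of complex_of_real] if_distrib[of "\<lambda>x. x * _"] sum.delta cong: if_cong)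
  have e: "Re (complex_of_real (LP_symbol q1 q2 B k) * DFT A B N grid (axis t 1) k * exp (\<i> * complex_of_real (freq B k \<bullet> grid_pt A N grid s)))
     = LP_symbol q1 q2 B k * cos (freq B k \<bullet> grid_pt A N grid s - freq B k \<bullet> grid_pt A N grid t) / real CARD('g)" for k
  proof -
    have "exp (- \<i> * complex_of_real (freq B k \<bullet> grid_pt A N grid t)) * exp (\<i> * complex_of_real (freq B k \<bullet> grid_pt A N grid s))
       = exp (\<i> * complex_of_real (freq B k \<bullet> grid_pt A N grid s - freq B k \<bullet> grid_pt A N grid t))"
      by (simp add: exp_add[symmetric] algebra_simps)
    then show ?thesis unfolding d
      by (simp add: Re_exp mult.assoc)
  qed
  show ?thesis unfolding LP_lin_def IDFT_def vec_lambda_beta Re_sum e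
    by (simp add: sum_divide_distrib)
qed


definition symm :: "real^'m^'m \<Rightarrow> bool" where
  "symm H \<longleftrightarrow> (\<forall>x y. (H *v x) \<bullet> y = x \<bullet> (H *v y))"

lemma symm_of_entries:
  fixes H :: "real^'m::finite^'m"
  assumes "\<And>i j. H$i$j = H$j$i"
  shows "symm H"
  unfolding symm_def
proof (intro allI)
  fix x y :: "real^'m"
  have "(H *v x) \<bullet> y = (\<Sum>i\<in>UNIV. \<Sum>j\<in>UNIV. H$i$j * x$j * y$i)"
    by (simp add: inner_vec_def matrix_vector_mult_def sum_distrib_right)
  also have "\<dots> = (\<Sum>j\<in>UNIV. \<Sum>i\<in>UNIV. H$i$j * x$j * y$i)"
    by (rule sum.swap)
  also have "\<dots> = x \<bullet> (H *v y)"
    by (simp add: inner_vec_def matrix_vector_mult_def sum_distrib_left assms mult_ac)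
  finally show "(H *v x) \<bullet> y = x \<bullet> (H *v y)" .
qed

lemma Wk_eq: "Wk H = {x. H *v x = 0}"
proof -
  have sub: "subspace {x. H *v x = 0}"
    by (auto simp: subspace_def matrix_vector_right_distrib matrix_vector_mult_scaleR)
  show ?thesis unfolding Wk_def
  proof
    show "span {v. v \<noteq> 0 \<and> H *v v = 0 *\<^sub>R v} \<subseteq> {x. H *v x = 0}"
      by (rule span_minimal[OF _ sub]) auto
    show "{x. H *v x = 0} \<subseteq> span {v. v \<noteq> 0 \<and> H *v v = 0 *\<^sub>R v}"
    proof
      fix x assume "x \<in> {x. H *v x = 0}"
      then show "x \<in> span {v. v \<noteq> 0 \<and> H *v v = 0 *\<^sub>R v}"
        by (cases "x = 0") (auto intro: span_base span_zero)
    qed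
  qed
qed

lemma lin_mv: "linear ((*v) (H::real^'m::finite^'n::finite))"
  by (rule matrix_vector_mul_linear)

lemma Ws_inv:
  assumes "w \<in> Ws H" shows "H *v w \<in> Ws H"
proof -
  let ?S = "{v. \<exists>c>0. v \<noteq> 0 \<and> H *v v = c *\<^sub>R v}"
  have "(*v) H ` ?S \<subseteq> span ?S"
  proof
    fix y assume "y \<in> (*v) H ` ?S"
    then obtain x c where "c > 0" "x \<noteq> 0" "H *v x = c *\<^sub>R x" "y = H *v x" by auto
    moreover have "x \<in> span ?S" using \<open>c > 0\<close> \<open>x \<noteq> 0\<close> \<open>H *v x = c *\<^sub>R x\<close>
      by (intro span_base) auto
    ultimately show "y \<in> span ?S" by (simp add: span_scale)
  qed
  then have "span ((*v) H ` ?S) \<subseteq> span ?S"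
    by (simp add: span_minimal)
  moreover have "H *v w \<in> span ((*v) H ` ?S)"
    using assms unfolding Ws_def span_linear_image[OF lin_mv] by auto
  ultimately show ?thesis unfolding Ws_def by auto
qed

lemma eig_orth:
  assumes "symm H" "H *v x = a *\<^sub>R x" "H *v y = b *\<^sub>R y" "a \<noteq> b"
  shows "x \<bullet> y = 0"
proof -
  have "a * (x \<bullet> y) = b * (x \<bullet> y)"
    using assms(1,2,3) unfolding symm_def
    by (metis inner_scaleR_left inner_scaleR_right)
  then show ?thesis using assms(4) by auto
qed

lemma ker_orth_Ws:
  assumes "symm H" "H *v k = 0" "w \<in> Ws H"
  shows "k \<bullet> w = 0"
proof -
  have "orthogonal k w"
  proof (rule orthogonal_to_span[OF assms(3)[unfolded Ws_def]])
    fix y assume "y \<in> {v. \<exists>c>0. v \<noteq> 0 \<and> H *v v = c *\<^sub>R v}"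
    then obtain c where "c > 0" "H *v y = c *\<^sub>R y" by auto
    then show "orthogonal k y"
      using eig_orth[OF assms(1), of k 0 y c] assms(2) by (simp add: orthogonal_def)
  qed
  then show ?thesis by (simp add: orthogonal_def)
qed

lemma quad_zero:
  fixes a b :: real
  assumes "\<And>t. t * b \<le> a * t^2"
  shows "b = 0"
proof (rule ccontr)
  assume "b \<noteq> 0"
  define s where "s = 1 / (\<bar>a\<bar> + 1)"
  have s0: "s > 0" unfolding s_def by auto
  have as: "a * s < 1"
  proof -
    have "a * s \<le> \<bar>a\<bar> * s" using s0 by (simp add: mult_right_mono)
    also have "\<dots> < 1" unfolding s_def by (simp add: field_simps)
    finally show ?thesis .
  qed
  have "(b * s) * b \<le> a * (b * s)^2" by (rule assms)
  then have "b^2 * s * (1 - a * s) \<le> 0" by (simp add: algebra_simps power2_eq_square)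
  moreover have "b^2 * s * (1 - a * s) > 0" using \<open>b \<noteq> 0\<close> s0 as by simp
  ultimately show False by simp
qed


lemma EV:
  fixes H :: "real^'m::finite^'m"
  assumes sy: "symm H" and T: "subspace T" and inv: "\<And>x. x \<in> T \<Longrightarrow> H *v x \<in> T"
    and y: "y \<in> T" "y \<noteq> 0"
  shows "\<exists>z\<in>T. z \<noteq> 0 \<and> (\<exists>c. H *v z = c *\<^sub>R z)"
proof -
  let ?S = "sphere 0 1 \<inter> T"
  have cS: "compact ?S" by (intro compact_Int_closed compact_sphere closed_subspace T)
  have "y /\<^sub>R norm y \<in> ?S" using y T by (auto simp: subspace_scale)
  then have ne: "?S \<noteq> {}" by blast
  have co: "continuous_on ?S (\<lambda>x. x \<bullet> (H *v x))" by (intro continuous_intros)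
  obtain y0 where y0S: "y0 \<in> ?S" and max: "\<And>w. w \<in> ?S \<Longrightarrow> w \<bullet> (H *v w) \<le> y0 \<bullet> (H *v y0)"
    using continuous_attains_sup[OF cS ne co] by blast
  define \<mu> where "\<mu> = y0 \<bullet> (H *v y0)"
  have y0T: "y0 \<in> T" and ny0: "norm y0 = 1" using y0S by auto
  have y0y0: "y0 \<bullet> y0 = 1" using ny0 by (simp add: norm_eq_sqrt_inner)
  have bound: "w \<bullet> (H *v w) \<le> \<mu> * (w \<bullet> w)" if "w \<in> T" for w
  proof (cases "w = 0")
    case True then show ?thesis by simp
  next
    case False
    have "w /\<^sub>R norm w \<in> ?S" using False that T by (auto simp: subspace_scale)
    then have "(w /\<^sub>R norm w) \<bullet> (H *v (w /\<^sub>R norm w)) \<le> \<mu>" using max \<mu>_def by blast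
    then have "(w \<bullet> (H *v w)) / (norm w)^2 \<le> \<mu>"
      by (simp add: matrix_vector_mult_scaleR power2_eq_square divide_inverse mult_ac)
    then have "w \<bullet> (H *v w) \<le> \<mu> * (norm w)^2" using False by (simp add: divide_le_eq)
    then show ?thesis by (simp add: power2_norm_eq_inner)
  qed
  define r where "r = H *v y0 - \<mu> *\<^sub>R y0"
  have rT: "r \<in> T" unfolding r_def using inv[OF y0T] y0T T by (simp add: subspace_diff subspace_scale)
  have sy0: "y0 \<bullet> (H *v r) = r \<bullet> (H *v y0)" using sy unfolding symm_def by (metis inner_commute)
  have rH: "r \<bullet> (H *v y0) = r \<bullet> r + \<mu> * (y0 \<bullet> r)"
    unfolding r_def by (simp add: inner_diff_left inner_diff_right inner_commute algebra_simps)
  have key: "t * (2 * (r \<bullet> r)) \<le> (\<mu> * (r \<bullet> r) - r \<bullet> (H *v r)) * t^2" for t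
  proof -
    have wT: "y0 + t *\<^sub>R r \<in> T" using y0T rT T by (simp add: subspace_add subspace_scale)
    have h1: "(y0 + t *\<^sub>R r) \<bullet> (H *v (y0 + t *\<^sub>R r)) = \<mu> + 2*t*(r \<bullet> (H *v y0)) + t^2*(r \<bullet> (H *v r))"
      using sy0 by (simp add: \<mu>_def matrix_vector_right_distrib matrix_vector_mult_scaleR inner_add_left inner_add_right power2_eq_square algebra_simps)
    have h2: "(y0 + t *\<^sub>R r) \<bullet> (y0 + t *\<^sub>R r) = 1 + 2*t*(y0 \<bullet> r) + t^2*(r \<bullet> r)"
      using y0y0 by (simp add: inner_add_left inner_add_right inner_commute power2_eq_square algebra_simps)
    have "\<mu> + 2*t*(r \<bullet> (H *v y0)) + t^2*(r \<bullet> (H *v r)) \<le> \<mu> * (1 + 2*t*(y0 \<bullet> r) + t^2*(r \<bullet> r))"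
      using bound[OF wT] h1 h2 by simp
    then show ?thesis unfolding rH by (simp add: algebra_simps)
  qed
  have "2 * (r \<bullet> r) = 0" by (rule quad_zero[OF key])
  then have "r = 0" by simp
  then have "H *v y0 = \<mu> *\<^sub>R y0" unfolding r_def by simp
  moreover have "y0 \<noteq> 0" using ny0 by auto
  ultimately show ?thesis using y0T by blast
qed


lemma no_neg_spec:
  fixes H :: "real^'m::finite^'m"
  assumes sy: "symm H" and nn: "no_neg_eigval H" and vo: "\<And>w. w \<in> Ws H \<Longrightarrow> v \<bullet> w = 0"
  shows "H *v v = 0"
proof -
  let ?K = "{x. H *v x = 0}"
  have subK: "subspace ?K"
    by (auto simp: subspace_def matrix_vector_right_distrib matrix_vector_mult_scaleR)
  obtain k r where k: "k \<in> span ?K" and r: "\<And>w. w \<in> span ?K \<Longrightarrow> orthogonal r w" and vkr: "v = k + r"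
    using orthogonal_subspace_decomp_exists[where S="{x. H *v x = 0}" and x=v] by blast
  have kK: "H *v k = 0" using k span_eq_iff[THEN iffD2, OF subK] by auto
  have rK: "r \<bullet> z = 0" if "H *v z = 0" for z
    using r[of z] that span_base[of z ?K] by (auto simp: orthogonal_def)
  have rWs: "r \<bullet> w = 0" if "w \<in> Ws H" for w
  proof -
    have "k \<bullet> w = 0" by (rule ker_orth_Ws[OF sy kK that])
    moreover have "v \<bullet> w = 0" by (rule vo[OF that])
    ultimately show ?thesis using vkr by (simp add: inner_add_left)
  qed
  let ?T = "{x. (\<forall>w\<in>Ws H. x \<bullet> w = 0) \<and> (\<forall>z. H *v z = 0 \<longrightarrow> x \<bullet> z = 0)}"
  have subT: "subspace ?T"
    by (auto simp: subspace_def inner_add_left)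
  have invT: "H *v x \<in> ?T" if "x \<in> ?T" for x
  proof -
    have "(H *v x) \<bullet> w = 0" if "w \<in> Ws H" for w
      using sy \<open>x \<in> ?T\<close> Ws_inv[OF that] unfolding symm_def by auto
    moreover have "(H *v x) \<bullet> z = 0" if "H *v z = 0" for z
      using sy that unfolding symm_def by auto
    ultimately show ?thesis by auto
  qed
  have "r = 0"
  proof (rule ccontr)
    assume "r \<noteq> 0"
    have rT: "r \<in> ?T" using rWs rK by auto
    have "\<exists>z\<in>?T. z \<noteq> 0 \<and> (\<exists>c. H *v z = c *\<^sub>R z)"
      by (rule EV[OF sy subT invT rT \<open>r \<noteq> 0\<close>])
    then obtain z c where zT: "z \<in> ?T" and z0: "z \<noteq> 0" and zc: "H *v z = c *\<^sub>R z"
      by (elim bexE conjE exE) 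

    have "c \<ge> 0" using nn zc z0 unfolding no_neg_eigval_def is_eigval_def by blast
    show False
    proof (cases "c = 0")
      case True
      then have "z \<bullet> z = 0" using zT zc by auto
      then show False using z0 by simp
    next
      case False
      then have "c > 0" using \<open>c \<ge> 0\<close> by simp
      then have "z \<in> Ws H" unfolding Ws_def using z0 zc by (intro span_base) auto
      then have "z \<bullet> z = 0" using zT by auto
      then show False using z0 by simp
    qed
  qed
  then show ?thesis using vkr kK by simp
qed

lemma no_neg_from_index:
  fixes H :: "real^'m::finite^'m"
  assumes sy: "symm H" and ni: "neg_index H = 0"
  shows "no_neg_eigval H"
proof -
  let ?E = "{c. c < 0 \<and> is_eigval H c}"
  have fin: "finite ?E"
  proof (rule ccontr)
    assume "infinite ?E"
    then obtain F where F: "F \<subseteq> ?E" "finite F" "card F = Suc DIM(real^'m)"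
      using infinite_arbitrarily_large by blast
    define f where "f c = (SOME v. v \<noteq> 0 \<and> H *v v = c *\<^sub>R v)" for c
    have fc: "f c \<noteq> 0 \<and> H *v f c = c *\<^sub>R f c" if "c \<in> F" for c
    proof -
      have "\<exists>v. v \<noteq> 0 \<and> H *v v = c *\<^sub>R v" using F(1) that unfolding is_eigval_def by auto
      then show ?thesis unfolding f_def by (rule someI_ex)
    qed
    have inj: "inj_on f F"
    proof (rule inj_onI)
      fix a b assume ab: "a \<in> F" "b \<in> F" "f a = f b"
      have e1: "H *v f a = a *\<^sub>R f a" "f a \<noteq> 0" using fc[OF ab(1)] by auto
      have e2: "H *v f b = b *\<^sub>R f b" using fc[OF ab(2)] by auto
      have "a *\<^sub>R f a = b *\<^sub>R f a" using e1(1) e2 ab(3) by metis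
      then have "(a - b) *\<^sub>R f a = 0" by (simp add: scaleR_diff_left)
      then show "a = b" using e1(2) by simp
    qed
    have "pairwise orthogonal (f ` F)"
    proof (rule pairwiseI)
      fix x y assume "x \<in> f ` F" "y \<in> f ` F" "x \<noteq> y"
      then obtain a b where "a \<in> F" "b \<in> F" "x = f a" "y = f b" "a \<noteq> b" by auto
      moreover have "H *v f a = a *\<^sub>R f a" "H *v f b = b *\<^sub>R f b"
        using fc[OF \<open>a \<in> F\<close>] fc[OF \<open>b \<in> F\<close>] by auto
      ultimately have "f a \<bullet> f b = 0" using eig_orth[OF sy] by blast
      then show "orthogonal x y" using \<open>x = f a\<close> \<open>y = f b\<close> by (simp add: orthogonal_def)
    qed
    moreover have "0 \<notin> f ` F" using fc by auto
    ultimately have "independent (f ` F)" by (rule pairwise_orthogonal_independent)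
    then have "card (f ` F) \<le> DIM(real^'m)" by (rule independent_bound[THEN conjunct2])
    moreover have "card (f ` F) = card F" using inj by (simp add: card_image)
    ultimately show False using F(3) by simp
  qed
  have "\<forall>c\<in>?E. dim {v. H *v v = c *\<^sub>R v} = 0"
    using ni fin unfolding neg_index_def by simp
  then have "?E = {}"
    unfolding is_eigval_def by (auto simp: dim_eq_0)
  then show ?thesis unfolding no_neg_eigval_def
    by (metis (mono_tags, lifting) empty_Collect_eq not_le)
qed

lemma orth_proj_zero:
  fixes W :: "(real^'m::finite) set"
  assumes W: "subspace W" and p: "orth_proj W v = 0"
  shows "\<And>w. w \<in> W \<Longrightarrow> v \<bullet> w = 0"
proof -
  obtain y z where y: "y \<in> span W" and z: "\<And>w. w \<in> span W \<Longrightarrow> orthogonal z w" and vyz: "v = y + z"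
    using orthogonal_subspace_decomp_exists[where S=W and x=v] by blast
  have sW: "span W = W" using W by (simp add: span_eq_iff)
  have P: "y \<in> W \<and> (\<forall>w\<in>W. (v - y) \<bullet> w = 0)"
    using y z vyz sW by (auto simp: orthogonal_def)
  have "orth_proj W v = y"
    unfolding orth_proj_def
  proof (rule the_equality)
    show "y \<in> W \<and> (\<forall>w\<in>W. (v - y) \<bullet> w = 0)" by (rule P)
  next
    fix p assume pp: "p \<in> W \<and> (\<forall>w\<in>W. (v - p) \<bullet> w = 0)"
    have d: "p - y \<in> W" using pp P W by (simp add: subspace_diff)
    have "(v - y) \<bullet> (p - y) = 0" "(v - p) \<bullet> (p - y) = 0" using P pp d by auto
    then have "(p - y) \<bullet> (p - y) = 0" by (simp add: inner_diff_left inner_diff_right inner_commute algebra_simps)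
    then show "p = y" by simp
  qed
  then have "y = 0" using p by simp
  then show "\<And>w. w \<in> W \<Longrightarrow> v \<bullet> w = 0" using z vyz sW by (auto simp: orthogonal_def)
qed


definition pcond :: "(real^'m::finite) set \<Rightarrow> (real^'m) set \<Rightarrow> (nat \<Rightarrow> real^'m) \<Rightarrow> (nat \<Rightarrow> real^'m) \<Rightarrow> nat \<Rightarrow> bool" where
  "pcond W W' us vs i \<longleftrightarrow>
        us i \<in> W \<and> vs i \<in> W' \<and> norm (us i) = 1 \<and> norm (vs i) = 1 \<and>
        (\<forall>j<i. us i \<bullet> us j = 0 \<and> vs i \<bullet> vs j = 0) \<and>
        (\<forall>u\<in>W. \<forall>v\<in>W'. u \<noteq> 0 \<longrightarrow> v \<noteq> 0 \<longrightarrow> (\<forall>j<i. u \<bullet> us j = 0 \<and> v \<bullet> vs j = 0) \<longrightarrow>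
            (u \<bullet> v) / (norm u * norm v) \<le> us i \<bullet> vs i)"

lemma principal_seq_pcond: "principal_seq W W' us vs \<longleftrightarrow> (\<forall>i<dim W. pcond W W' us vs i)"
  by (simp add: principal_seq_def pcond_def)

lemma pcond_cong:
  assumes "\<And>j. j \<le> i \<Longrightarrow> us' j = us j" "\<And>j. j \<le> i \<Longrightarrow> vs' j = vs j"
  shows "pcond W W' us' vs' i = pcond W W' us vs i"
  unfolding pcond_def using assms by simp

lemma pmax:
  assumes ps: "principal_seq W W' us vs" and i: "i < dim W" and u: "u \<in> W" and v: "v \<in> W'"
    and o: "\<And>j. j < i \<Longrightarrow> u \<bullet> us j = 0 \<and> v \<bullet> vs j = 0"
  shows "u \<bullet> v \<le> norm u * norm v * (us i \<bullet> vs i)"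
proof (cases "u = 0 \<or> v = 0")
  case True then show ?thesis by auto
next
  case False
  then have "(u \<bullet> v) / (norm u * norm v) \<le> us i \<bullet> vs i"
    using ps i u v o unfolding principal_seq_def by blast
  moreover have "norm u * norm v > 0" using False by simp
  ultimately show ?thesis by (simp add: pos_divide_le_eq mult_ac)
qed

lemma ps_basic:
  assumes ps: "principal_seq W W' us vs" and i: "i < dim W"
  shows "us i \<in> W" "vs i \<in> W'" "norm (us i) = 1" "norm (vs i) = 1"
    "\<And>j. j < i \<Longrightarrow> us i \<bullet> us j = 0" "\<And>j. j < i \<Longrightarrow> vs i \<bullet> vs j = 0"
  using ps i unfolding principal_seq_def by blast+

lemma c_nonneg:
  assumes ps: "principal_seq W W' us vs" and i: "i < dim W" and W': "subspace W'"
  shows "0 \<le> us i \<bullet> vs i"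
proof -
  have "us i \<bullet> (- vs i) \<le> norm (us i) * norm (- vs i) * (us i \<bullet> vs i)"
    using ps_basic[OF ps i] W'
    by (intro pmax[OF ps i]) (auto simp: subspace_neg inner_commute)
  then show ?thesis using ps_basic[OF ps i] by simp
qed

lemma c_mono:
  assumes ps: "principal_seq W W' us vs" and kj: "k \<le> j" "j < dim W"
  shows "us j \<bullet> vs j \<le> us k \<bullet> vs k"
proof -
  have k: "k < dim W" using kj by simp
  have "us j \<bullet> vs j \<le> norm (us j) * norm (vs j) * (us k \<bullet> vs k)"
    using ps_basic[OF ps kj(2)] kj
    by (intro pmax[OF ps k]) auto
  then show ?thesis using ps_basic[OF ps kj(2)] by simp
qed

lemma norm_orth_bound:
  fixes a b :: "real^'m::finite"
  assumes "norm a = 1" "norm b = 1" "a \<bullet> b = 0"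
  shows "norm (a + t *\<^sub>R b) \<le> 1 + t^2 / 2"
proof -
  have aa: "a \<bullet> a = 1" "b \<bullet> b = 1" using assms(1,2) by (simp_all add: norm_eq_sqrt_inner)
  have ba: "b \<bullet> a = 0" using assms(3) by (simp add: inner_commute)
  have "(norm (a + t *\<^sub>R b))^2 = (a + t *\<^sub>R b) \<bullet> (a + t *\<^sub>R b)" by (simp add: power2_norm_eq_inner)
  also have "\<dots> = 1 + t^2"
    using aa ba assms(3) by (simp add: inner_add_left inner_add_right power2_eq_square)
  also have "\<dots> \<le> (1 + t^2/2)^2"
  proof -
    have "0 \<le> (t^2)^2" by simp
    then show ?thesis by (simp add: power2_eq_square algebra_simps)
  qed
  finally show ?thesis by (rule power2_le_imp_le) simp
qed

lemma P1:
  assumes ps: "principal_seq W W' us vs" and W: "subspace W" and W': "subspace W'"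
    and kj: "k < j" "j < dim W"
  shows "us j \<bullet> vs k = 0"
proof -
  have k: "k < dim W" using kj by simp
  note bk = ps_basic[OF ps k] and bj = ps_basic[OF ps kj(2)]
  define c where "c = us k \<bullet> vs k"
  have c0: "0 \<le> c" unfolding c_def by (rule c_nonneg[OF ps k W'])
  have "t * (us j \<bullet> vs k) \<le> (c / 2) * t^2" for t
  proof -
    let ?u = "us k + t *\<^sub>R us j"
    have uW: "?u \<in> W" using bk bj W by (simp add: subspace_add subspace_scale)
    have "?u \<bullet> vs k \<le> norm ?u * norm (vs k) * c"
      unfolding c_def using bk bj kj uW
      by (intro pmax[OF ps k]) (auto simp: inner_add_left)
    moreover have "norm ?u \<le> 1 + t^2/2"
      using bk bj kj inner_commute[of "us k" "us j"] by (intro norm_orth_bound) auto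
    ultimately have "c + t * (us j \<bullet> vs k) \<le> (1 + t^2/2) * c"
      using bk c0 unfolding c_def by (simp add: inner_add_left) (smt (verit) mult_right_mono)
    then show ?thesis by (simp add: algebra_simps)
  qed
  then show ?thesis by (rule quad_zero)
qed

lemma P2:
  assumes ps: "principal_seq W W' us vs" and W: "subspace W" and W': "subspace W'"
    and jk: "j < k" "k < dim W"
  shows "us j \<bullet> vs k = 0"
proof -
  have j: "j < dim W" using jk by simp
  note bj = ps_basic[OF ps j] and bk = ps_basic[OF ps jk(2)]
  define c where "c = us j \<bullet> vs j"
  have c0: "0 \<le> c" unfolding c_def by (rule c_nonneg[OF ps j W'])
  have "t * (us j \<bullet> vs k) \<le> (c / 2) * t^2" for t
  proof -
    let ?v = "vs j + t *\<^sub>R vs k"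
    have vW: "?v \<in> W'" using bk bj W' by (simp add: subspace_add subspace_scale)
    have "us j \<bullet> ?v \<le> norm (us j) * norm ?v * c"
      unfolding c_def using bk bj jk vW
      by (intro pmax[OF ps j]) (auto simp: inner_add_left)
    moreover have "norm ?v \<le> 1 + t^2/2"
      using bk bj jk inner_commute[of "vs j" "vs k"] by (intro norm_orth_bound) auto
    ultimately have "c + t * (us j \<bullet> vs k) \<le> (1 + t^2/2) * c"
      using bj c0 unfolding c_def by (simp add: inner_add_right) (smt (verit) mult_right_mono)
    then show ?thesis by (simp add: algebra_simps)
  qed
  then show ?thesis by (rule quad_zero)
qed


lemma orth_family_expand:
  fixes e :: "nat \<Rightarrow> real^'m::finite"
  assumes n: "\<And>j. j < d \<Longrightarrow> norm (e j) = 1"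
    and o: "\<And>j l. j < d \<Longrightarrow> l < d \<Longrightarrow> j \<noteq> l \<Longrightarrow> e j \<bullet> e l = 0"
    and x: "x \<in> span (e ` {..<d})"
  shows "x = (\<Sum>j<d. (x \<bullet> e j) *\<^sub>R e j)"
proof -
  let ?Q = "{x. x = (\<Sum>j<d. (x \<bullet> e j) *\<^sub>R e j)}"
  have sc: "c *\<^sub>R x \<in> ?Q" if "x \<in> ?Q" for c x
  proof -
    have "c *\<^sub>R x = c *\<^sub>R (\<Sum>j<d. (x \<bullet> e j) *\<^sub>R e j)" using that by simp
    also have "\<dots> = (\<Sum>j<d. ((c *\<^sub>R x) \<bullet> e j) *\<^sub>R e j)" by (simp add: scaleR_sum_right)
    finally show ?thesis by (simp only: mem_Collect_eq)
  qed
  have ad: "x + y \<in> ?Q" if "x \<in> ?Q" "y \<in> ?Q" for x y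
  proof -
    have "x + y = (\<Sum>j<d. (x \<bullet> e j) *\<^sub>R e j) + (\<Sum>j<d. (y \<bullet> e j) *\<^sub>R e j)" using that by simp
    also have "\<dots> = (\<Sum>j<d. ((x + y) \<bullet> e j) *\<^sub>R e j)" by (simp add: inner_add_left scaleR_add_left sum.distrib)
    finally show ?thesis by (simp only: mem_Collect_eq)
  qed
  have z: "0 \<in> ?Q" by simp
  have sub: "subspace ?Q"
    unfolding subspace_def using z sc ad by blast
  have "e i \<in> ?Q" if "i < d" for i
  proof -
    have "(\<Sum>j<d. (e i \<bullet> e j) *\<^sub>R e j) = (\<Sum>j<d. if j = i then e j else 0)"
    proof (rule sum.cong)
      fix j assume "j \<in> {..<d}"
      then show "(e i \<bullet> e j) *\<^sub>R e j = (if j = i then e j else 0)"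
        using o[of i j] that n[of i] by (auto simp: norm_eq_sqrt_inner)
    qed simp
    also have "\<dots> = e i" using that by (simp add: sum.delta)
    finally show ?thesis by simp
  qed
  then have "e ` {..<d} \<subseteq> ?Q" by auto
  then have "span (e ` {..<d}) \<subseteq> ?Q" by (rule span_minimal[OF _ sub])
  then show ?thesis using x by auto
qed

lemma ps_span:
  assumes ps: "principal_seq W W' us vs" and W: "subspace W"
  shows "W \<subseteq> span (us ` {..<dim W})"
proof -
  let ?B = "us ` {..<dim W}"
  have inj: "inj_on us {..<dim W}"
  proof (rule inj_onI)
    fix i j assume ij: "i \<in> {..<dim W}" "j \<in> {..<dim W}" "us i = us j"
    show "i = j"
    proof (rule ccontr)
      assume "i \<noteq> j"
      then have "us i \<bullet> us j = 0 \<or> us j \<bullet> us i = 0"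
        using ps_basic(5)[OF ps, of i j] ps_basic(5)[OF ps, of j i] ij by (cases "i < j") auto
      moreover have "norm (us i) = 1" using ps_basic(3)[OF ps] ij by auto
      ultimately show False using ij(3) by (auto simp: norm_eq_sqrt_inner)
    qed
  qed
  have card: "card ?B = dim W" using inj by (simp add: card_image)
  have sub: "?B \<subseteq> W" using ps_basic(1)[OF ps] by auto
  have "pairwise orthogonal ?B"
  proof (rule pairwiseI)
    fix x y assume "x \<in> ?B" "y \<in> ?B" "x \<noteq> y"
    then obtain i j where "i < dim W" "j < dim W" "x = us i" "y = us j" "i \<noteq> j" by auto
    then show "orthogonal x y"
      using ps_basic(5)[OF ps, of i j] ps_basic(5)[OF ps, of j i]
      by (cases "i < j") (auto simp: orthogonal_def inner_commute)
  qed
  moreover have "0 \<notin> ?B" using ps_basic(3)[OF ps] by force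
  ultimately have "independent ?B" by (rule pairwise_orthogonal_independent)
  then show ?thesis using card_eq_dim[OF sub card] by simp
qed

lemma principal_zero:
  assumes ps: "principal_seq W W' us vs" and W: "subspace W" and W': "subspace W'"
    and d: "0 < dim W" and x: "x \<in> W" "x \<noteq> 0" and xo: "\<And>w. w \<in> W' \<Longrightarrow> x \<bullet> w = 0"
  shows "us (dim W - 1) \<bullet> vs (dim W - 1) = 0"
proof -
  let ?d = "dim W"
  have xs: "x \<in> span (us ` {..<?d})" using ps_span[OF ps W] x by auto
  have ex: "x = (\<Sum>j<?d. (x \<bullet> us j) *\<^sub>R us j)"
  proof (rule orth_family_expand[OF _ _ xs])
    show "\<And>j. j < ?d \<Longrightarrow> norm (us j) = 1" using ps_basic(3)[OF ps] by auto
    fix j l assume "j < ?d" "l < ?d" "j \<noteq> l"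
    then show "us j \<bullet> us l = 0"
      using ps_basic(5)[OF ps, of j l] ps_basic(5)[OF ps, of l j]
      by (cases "j < l") (auto simp: inner_commute)
  qed
  obtain k where k: "k < ?d" "x \<bullet> us k \<noteq> 0"
  proof (rule ccontr)
    assume "\<not> thesis"
    then have "\<forall>k<?d. x \<bullet> us k = 0" using that by blast
    then have "x = 0" using ex by simp
    then show False using x by simp
  qed
  have "x \<bullet> vs k = (\<Sum>j<?d. (x \<bullet> us j) * (us j \<bullet> vs k))"
    by (subst ex) (simp add: inner_sum_left)
  also have "\<dots> = (\<Sum>j<?d. if j = k then (x \<bullet> us j) * (us j \<bullet> vs k) else 0)"
  proof (rule sum.cong)
    fix j assume "j \<in> {..<?d}"
    then show "(x \<bullet> us j) * (us j \<bullet> vs k) = (if j = k then (x \<bullet> us j) * (us j \<bullet> vs k) else 0)"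
      using P1[OF ps W W', of k j] P2[OF ps W W', of j k] k by (cases "j < k"; cases "k < j") auto
  qed simp
  also have "\<dots> = (x \<bullet> us k) * (us k \<bullet> vs k)" using k by (simp add: sum.delta)
  finally have "(x \<bullet> us k) * (us k \<bullet> vs k) = 0" using xo[OF ps_basic(2)[OF ps k(1)]] by simp
  then have ck: "us k \<bullet> vs k = 0" using k by simp
  have "us (?d - 1) \<bullet> vs (?d - 1) \<le> us k \<bullet> vs k"
    using c_mono[OF ps, of k "?d - 1"] k d by simp
  moreover have "0 \<le> us (?d - 1) \<bullet> vs (?d - 1)" using c_nonneg[OF ps _ W'] d by simp
  ultimately show ?thesis using ck by simp
qed


lemma exists_orth:
  fixes e :: "nat \<Rightarrow> real^'m::finite"
  assumes W: "subspace W" and eW: "\<And>j. j < i \<Longrightarrow> e j \<in> W"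
    and n: "\<And>j. j < i \<Longrightarrow> norm (e j) = 1"
    and o: "\<And>j l. j < i \<Longrightarrow> l < i \<Longrightarrow> j \<noteq> l \<Longrightarrow> e j \<bullet> e l = 0"
    and i: "i < dim W"
  shows "\<exists>u\<in>W. norm u = 1 \<and> (\<forall>j<i. u \<bullet> e j = 0)"
proof (rule ccontr)
  assume no: "\<not> ?thesis"
  have "W \<subseteq> span (e ` {..<i})"
  proof
    fix w assume wW: "w \<in> W"
    define z where "z = w - (\<Sum>j<i. (w \<bullet> e j) *\<^sub>R e j)"
    have sW: "(\<Sum>j<i. (w \<bullet> e j) *\<^sub>R e j) \<in> W"
      using eW W by (intro subspace_sum subspace_scale) auto
    have zW: "z \<in> W" unfolding z_def using wW sW W by (simp add: subspace_diff)
    have zo: "z \<bullet> e k = 0" if "k < i" for k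
    proof -
      have "(\<Sum>j<i. (w \<bullet> e j) * (e j \<bullet> e k)) = (\<Sum>j<i. if j = k then w \<bullet> e j else 0)"
      proof (rule sum.cong)
        fix j assume "j \<in> {..<i}"
        then show "(w \<bullet> e j) * (e j \<bullet> e k) = (if j = k then w \<bullet> e j else 0)"
          using o[of j k] that n[of k] by (auto simp: norm_eq_sqrt_inner)
      qed simp
      also have "\<dots> = w \<bullet> e k" using that by (simp add: sum.delta)
      finally show ?thesis unfolding z_def by (simp add: inner_diff_left inner_sum_left)
    qed
    have "z = 0"
    proof (rule ccontr)
      assume "z \<noteq> 0"
      then have "z /\<^sub>R norm z \<in> W \<and> norm (z /\<^sub>R norm z) = 1 \<and> (\<forall>j<i. (z /\<^sub>R norm z) \<bullet> e j = 0)"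
        using zW zo W by (simp add: subspace_scale)
      then show False using no by blast
    qed
    then have "w = (\<Sum>j<i. (w \<bullet> e j) *\<^sub>R e j)" unfolding z_def by simp
    moreover have "(\<Sum>j<i. (w \<bullet> e j) *\<^sub>R e j) \<in> span (e ` {..<i})"
      by (intro span_sum span_scale span_base) auto
    ultimately show "w \<in> span (e ` {..<i})" by simp
  qed
  then have "dim W \<le> dim (span (e ` {..<i}))" by (rule dim_subset)
  also have "\<dots> = dim (e ` {..<i})" by (simp add: dim_span)
  also have "\<dots> \<le> card (e ` {..<i})" by (rule dim_le_card) (auto intro: span_base)
  also have "\<dots> \<le> i" using card_image_le[of "{..<i}" e] by simp
  finally show False using i by simp
qed

lemma principal_exists:
  fixes W W' :: "(real^'m::finite) set"
  assumes W: "subspace W" and W': "subspace W'" and dd: "dim W \<le> dim W'"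
  shows "\<exists>us vs. principal_seq W W' us vs"
proof -
  have "\<forall>i. i \<le> dim W \<longrightarrow> (\<exists>us vs. \<forall>i'<i. pcond W W' us vs i')"
  proof (intro allI)
    fix i show "i \<le> dim W \<longrightarrow> (\<exists>us vs. \<forall>i'<i. pcond W W' us vs i')"
    proof (induction i)
      case 0 then show ?case by simp
    next
      case (Suc i)
      show ?case
      proof
        assume si: "Suc i \<le> dim W"
        then obtain us vs where IH: "\<forall>i'<i. pcond W W' us vs i'" using Suc.IH by auto
        have usW: "us j \<in> W" and vsW: "vs j \<in> W'" and nus: "norm (us j) = 1" and nvs: "norm (vs j) = 1"
          if "j < i" for j using IH that unfolding pcond_def by auto
        have ous: "us j \<bullet> us l = 0" and ovs: "vs j \<bullet> vs l = 0"
          if "j < i" "l < i" "j \<noteq> l" for j l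
        proof -
          have "(us j \<bullet> us l = 0 \<and> vs j \<bullet> vs l = 0) \<or> (us l \<bullet> us j = 0 \<and> vs l \<bullet> vs j = 0)"
            using IH that unfolding pcond_def by (cases "j < l") auto
          then show "us j \<bullet> us l = 0" "vs j \<bullet> vs l = 0" by (auto simp: inner_commute)
        qed
        let ?U = "{u\<in>W. \<forall>j<i. u \<bullet> us j = 0}"
        let ?V = "{v\<in>W'. \<forall>j<i. v \<bullet> vs j = 0}"
        have subU: "subspace ?U" using W unfolding subspace_def by (auto simp: inner_add_left)
        have subV: "subspace ?V" using W' unfolding subspace_def by (auto simp: inner_add_left)
        have "\<exists>u\<in>W. norm u = 1 \<and> (\<forall>j<i. u \<bullet> us j = 0)"
          by (rule exists_orth[OF W usW nus ous]) (use si in auto)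
        then obtain u1 where u1: "u1 \<in> sphere 0 1 \<inter> ?U" by auto
        have "\<exists>v\<in>W'. norm v = 1 \<and> (\<forall>j<i. v \<bullet> vs j = 0)"
          by (rule exists_orth[OF W' vsW nvs ovs]) (use si dd in auto)
        then obtain v1 where v1: "v1 \<in> sphere 0 1 \<inter> ?V" by auto
        let ?P = "(sphere 0 1 \<inter> ?U) \<times> (sphere 0 1 \<inter> ?V)"
        have cP: "compact ?P"
          by (intro compact_Times compact_Int_closed compact_sphere closed_subspace subU subV)
        have neP: "?P \<noteq> {}" using u1 v1 by blast
        have coP: "continuous_on ?P (\<lambda>p. fst p \<bullet> snd p)" by (intro continuous_intros)
        obtain p where pP: "p \<in> ?P" and pmx: "\<And>q. q \<in> ?P \<Longrightarrow> fst q \<bullet> snd q \<le> fst p \<bullet> snd p"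
          using continuous_attains_sup[OF cP neP coP] by blast
        define us' where "us' = us(i := fst p)"
        define vs' where "vs' = vs(i := snd p)"
        have old: "pcond W W' us' vs' i'" if "i' < i" for i'
        proof -
          have "pcond W W' us' vs' i' = pcond W W' us vs i'"
            by (rule pcond_cong) (use that in \<open>auto simp: us'_def vs'_def\<close>)
          then show ?thesis using IH that by simp
        qed
        have new: "pcond W W' us' vs' i"
          unfolding pcond_def
        proof (intro conjI)
          show "us' i \<in> W" "vs' i \<in> W'" "norm (us' i) = 1" "norm (vs' i) = 1"
            using pP by (auto simp: us'_def vs'_def)
          show "\<forall>j<i. us' i \<bullet> us' j = 0 \<and> vs' i \<bullet> vs' j = 0"
            using pP by (auto simp: us'_def vs'_def)
          show "\<forall>u\<in>W. \<forall>v\<in>W'. u \<noteq> 0 \<longrightarrow> v \<noteq> 0 \<longrightarrow> (\<forall>j<i. u \<bullet> us' j = 0 \<and> v \<bullet> vs' j = 0) \<longrightarrow>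
            (u \<bullet> v) / (norm u * norm v) \<le> us' i \<bullet> vs' i"
          proof (intro ballI impI)
            fix u v assume uv: "u \<in> W" "v \<in> W'" "u \<noteq> 0" "v \<noteq> 0"
              "\<forall>j<i. u \<bullet> us' j = 0 \<and> v \<bullet> vs' j = 0"
            have "(u /\<^sub>R norm u, v /\<^sub>R norm v) \<in> ?P"
              using uv W W' by (auto simp: us'_def vs'_def subspace_scale)
            then have "(u /\<^sub>R norm u) \<bullet> (v /\<^sub>R norm v) \<le> fst p \<bullet> snd p" using pmx by fastforce
            then show "(u \<bullet> v) / (norm u * norm v) \<le> us' i \<bullet> vs' i"
              by (simp add: us'_def vs'_def divide_inverse mult_ac)
          qed
        qed
        have "\<forall>i'<Suc i. pcond W W' us' vs' i'"
          using old new less_Suc_eq by auto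
        then show "\<exists>us vs. \<forall>i'<Suc i. pcond W W' us vs i'" by blast
      qed
    qed
  qed
  then obtain us vs where "\<forall>i'<dim W. pcond W W' us vs i'" by blast
  then show ?thesis unfolding principal_seq_pcond by blast
qed


lemma hess_symm: "symm (LP_hess A B N grid q1 q2 \<epsilon> \<alpha> X)"
proof (rule symm_of_entries)
  fix i j
  have c: "cos (x - y) = cos (y - x)" for x y :: real by (metis cos_minus minus_diff_eq)
  have "LP_lin A B N grid q1 q2 (axis j 1) $ i = LP_lin A B N grid q1 q2 (axis i 1) $ j"
    unfolding LP_lin_axis by (subst c) (rule refl)
  then show "LP_hess A B N grid q1 q2 \<epsilon> \<alpha> X $ i $ j = LP_hess A B N grid q1 q2 \<epsilon> \<alpha> X $ j $ i"
    unfolding LP_hess_def by simp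
qed

lemma gip_zero: "gip v w = 0 \<Longrightarrow> v \<bullet> w = 0"
  for v w :: "real^'g::finite"
  by (simp add: gip_def inner_vec_def)

theorem lemma4p1:
  fixes A B :: "real^'n::finite^'n" and N :: nat and grid :: "'g::finite \<Rightarrow> 'n \<Rightarrow> nat"
    and q1 q2 \<epsilon> \<alpha> :: real and U Ubar v :: "real^'g"
  assumes "invertible A"
    and "A ** transpose B = (2 * pi) *\<^sub>R mat 1"
    and "bij_betw grid UNIV {j. \<forall>i. j i < N}"
    and "\<exists>Ustar. is_GLM A B N grid q1 q2 \<epsilon> \<alpha> Ustar
                \<and> in_GQR A B N grid q1 q2 \<epsilon> \<alpha> Ustar U
                \<and> in_GQR A B N grid q1 q2 \<epsilon> \<alpha> Ustar Ubar"
    and "dim (Wk (LP_hess A B N grid q1 q2 \<epsilon> \<alpha> U))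
           \<le> dim (Wk (LP_hess A B N grid q1 q2 \<epsilon> \<alpha> Ubar))"
    and "sin_Theta_norm (Wk (LP_hess A B N grid q1 q2 \<epsilon> \<alpha> U))
                        (Wk (LP_hess A B N grid q1 q2 \<epsilon> \<alpha> Ubar)) < 1"
    and "is_constrained_min (LP_hess A B N grid q1 q2 \<epsilon> \<alpha> U)
                            (Wk (LP_hess A B N grid q1 q2 \<epsilon> \<alpha> Ubar)) v"
  shows "orth_proj (Ws (LP_hess A B N grid q1 q2 \<epsilon> \<alpha> U)) v \<noteq> 0"
proof
  assume p0: "orth_proj (Ws (LP_hess A B N grid q1 q2 \<epsilon> \<alpha> U)) v = 0"
  define H where "H = LP_hess A B N grid q1 q2 \<epsilon> \<alpha> U"
  define H' where "H' = LP_hess A B N grid q1 q2 \<epsilon> \<alpha> Ubar"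
  define W where "W = Wk H"
  define W' where "W' = Wk H'"
  have syH: "symm H" unfolding H_def by (rule hess_symm)
  obtain Us where GLM: "is_GLM A B N grid q1 q2 \<epsilon> \<alpha> Us"
    and gq: "in_GQR A B N grid q1 q2 \<epsilon> \<alpha> Us U" using assms(4) by blast
  have "no_neg_eigval (LP_hess A B N grid q1 q2 \<epsilon> \<alpha> Us)" using GLM unfolding is_GLM_def by blast
  then have "{c. c < 0 \<and> is_eigval (LP_hess A B N grid q1 q2 \<epsilon> \<alpha> Us) c} = {}"
    unfolding no_neg_eigval_def by force
  then have "neg_index (LP_hess A B N grid q1 q2 \<epsilon> \<alpha> Us) = 0"
    unfolding neg_index_def by (simp only: sum.empty)
  then have "neg_index H = 0" using gq unfolding in_GQR_def H_def by simp
  then have nnH: "no_neg_eigval H" by (rule no_neg_from_index[OF syH])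
  have cm: "gip v v = 1" "\<forall>w\<in>W'. gip v w = 0"
    using assms(7) unfolding is_constrained_min_def W'_def H'_def by blast+
  have v0: "v \<noteq> 0" using cm(1) by (auto simp: gip_def)
  have vW': "\<And>w. w \<in> W' \<Longrightarrow> v \<bullet> w = 0" using cm(2) gip_zero by blast
  have subWs: "subspace (Ws H)" unfolding Ws_def by (rule subspace_span)
  have "\<And>w. w \<in> Ws H \<Longrightarrow> v \<bullet> w = 0"
    by (rule orth_proj_zero[OF subWs]) (use p0 in \<open>simp add: H_def\<close>)
  then have "H *v v = 0" by (rule no_neg_spec[OF syH nnH])
  then have vW: "v \<in> W" unfolding W_def Wk_eq by simp
  have subK: "subspace {x. X *v x = 0}" for X :: "real^'g^'g"
    by (auto simp: subspace_def matrix_vector_right_distrib matrix_vector_mult_scaleR)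
  have sW: "subspace W" "subspace W'" unfolding W_def W'_def Wk_eq by (rule subK)+
  have dpos: "0 < dim W"
  proof (rule ccontr)
    assume "\<not> 0 < dim W"
    then have "W \<subseteq> {0}" using dim_eq_0 by blast
    then show False using vW v0 by blast
  qed
  have dd: "dim W \<le> dim W'" using assms(5) unfolding W_def W'_def H_def H'_def .
  have ex: "\<exists>\<theta>. \<exists>us vs. principal_seq W W' us vs \<and> (\<forall>i. \<theta> i = arccos (us i \<bullet> vs i))"
  proof -
    obtain us vs where "principal_seq W W' us vs" using principal_exists[OF sW dd] by blast
    then show ?thesis by (intro exI[of _ "\<lambda>i. arccos (us i \<bullet> vs i)"]) blast
  qed
  obtain us vs where ps: "principal_seq W W' us vs"
    and th: "\<forall>i. principal_angles W W' i = arccos (us i \<bullet> vs i)"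
    using someI_ex[OF ex] unfolding principal_angles_def by blast
  have "us (dim W - 1) \<bullet> vs (dim W - 1) = 0"
    by (rule principal_zero[OF ps sW dpos vW v0 vW'])
  then have "principal_angles W W' (dim W - 1) = pi / 2" using th by simp
  then have "sin (principal_angles W W' (dim W - 1)) = 1" by (simp only: sin_pi_half)
  then have "sin_Theta_norm W W' = 1" unfolding sin_Theta_norm_def using dpos by (simp del: dim_eq_0)
  then show False using assms(6) unfolding W_def W'_def H_def H'_def by simp
qed

end
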